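(* For every $d\in(0,1]$ there is $\varepsilon_0>0$ such that for every $\varepsilon\in(0,\varepsilon_0]$ there is $r_0$ such that for every $r\ge r_0$ there is $\zeta_0>0$ such that for every $\zeta\in(0,\zeta_0]$ there is $n_0$ such that the following holds for all $n\ge n_0$. Let $G$ be an $n$-vertex graph with a partition $V(G)=V_1\sqcup\dots\sqcup V_r$ satisfying $\big||V_i|-|V_j|\big|\le1$ for all $i,j$, and let $R$ be the $(\varepsilon,d)$-reduced graph of $G$ with respect to this partition. Suppose $R$ is connected and non-bipartite. Then there is an odd integer $L\le 2r$ such that for all $i,j\in V(R)$ (not necessarily distinct) and all sets $X\subseteq V_i$ with $|X|\ge d|V_i|$ and $Y\subseteq V_j$ with $|Y|\ge d|V_j|$, $G$ contains at least $\zeta n^{L+1}$ paths of length $L$ starting in $X$ and ending in $Y$.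
   Context: For nonempty disjoint vertex sets $X,Y$ of a graph $G$, the density is $d_G(X,Y)=e_G(X,Y)/(|X||Y|)$. A pair $(A,B)$ of disjoint nonempty vertex sets is $\varepsilon$-regular if $|d_G(A,B)-d_G(A',B')|\le\varepsilon$ for all $A'\subseteq A$, $B'\subseteq B$ with $|A'|\ge\varepsilon|A|$, $|B'|\ge\varepsilon|B|$. Given a partition $V(G)=V_1\sqcup\dots\sqcup V_r$, the $(\varepsilon,d)$-reduced graph $R$ has vertex set $[r]$, with $ij\in E(R)$ iff $(V_i,V_j)$ is $\varepsilon$-regular of density at least $d$. The length of a path is its number of edges; paths are counted as sequences of distinct vertices. *)

theory Defs
  imports Main Complex_Main
begin

definition is_graph :: "nat \<Rightarrow> (nat \<Rightarrow> nat \<Rightarrow> bool) \<Rightarrow> bool" where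
  "is_graph n E \<longleftrightarrow> (\<forall>x y. E x y \<longrightarrow> x < n \<and> y < n \<and> x \<noteq> y \<and> E y x)"

definition edges_between :: "(nat \<Rightarrow> nat \<Rightarrow> bool) \<Rightarrow> nat set \<Rightarrow> nat set \<Rightarrow> nat" where
  "edges_between E X Y = card {(x, y). x \<in> X \<and> y \<in> Y \<and> E x y}"

definition density :: "(nat \<Rightarrow> nat \<Rightarrow> bool) \<Rightarrow> nat set \<Rightarrow> nat set \<Rightarrow> real" where
  "density E X Y = real (edges_between E X Y) / (real (card X) * real (card Y))"

definition regular_pair :: "(nat \<Rightarrow> nat \<Rightarrow> bool) \<Rightarrow> real \<Rightarrow> nat set \<Rightarrow> nat set \<Rightarrow> bool" where
  "regular_pair E \<epsilon> A B \<longleftrightarrow>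
     (\<forall>A' B'. A' \<subseteq> A \<and> B' \<subseteq> B \<and> real (card A') \<ge> \<epsilon> * real (card A)
        \<and> real (card B') \<ge> \<epsilon> * real (card B)
        \<longrightarrow> \<bar>density E A B - density E A' B'\<bar> \<le> \<epsilon>)"

definition reduced_graph ::
  "(nat \<Rightarrow> nat \<Rightarrow> bool) \<Rightarrow> (nat \<Rightarrow> nat set) \<Rightarrow> nat \<Rightarrow> real \<Rightarrow> real \<Rightarrow> nat \<Rightarrow> nat \<Rightarrow> bool" where
  "reduced_graph E V r \<epsilon> d i j \<longleftrightarrow> i < r \<and> j < r \<and> i \<noteq> j \<and>
     regular_pair E \<epsilon> (V i) (V j) \<and> density E (V i) (V j) \<ge> d"

definition connected_on :: "nat \<Rightarrow> (nat \<Rightarrow> nat \<Rightarrow> bool) \<Rightarrow> bool" where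
  "connected_on r R \<longleftrightarrow> (\<forall>i<r. \<forall>j<r. R\<^sup>*\<^sup>* i j)"

definition bipartite_on :: "nat \<Rightarrow> (nat \<Rightarrow> nat \<Rightarrow> bool) \<Rightarrow> bool" where
  "bipartite_on r R \<longleftrightarrow> (\<exists>f :: nat \<Rightarrow> bool. \<forall>i<r. \<forall>j<r. R i j \<longrightarrow> f i \<noteq> f j)"

definition paths_between :: "nat \<Rightarrow> (nat \<Rightarrow> nat \<Rightarrow> bool) \<Rightarrow> nat \<Rightarrow> nat set \<Rightarrow> nat set \<Rightarrow> nat list set" where
  "paths_between n E L X Y = {p. length p = L + 1 \<and> distinct p \<and> set p \<subseteq> {..<n}
      \<and> (\<forall>k<L. E (p ! k) (p ! Suc k)) \<and> hd p \<in> X \<and> last p \<in> Y}"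

end

theory Submission
  imports Defs
begin

definition wk :: "(nat \<Rightarrow> nat \<Rightarrow> bool) \<Rightarrow> nat \<Rightarrow> nat \<Rightarrow> nat \<Rightarrow> bool" where
  "wk R k a b \<longleftrightarrow> (\<exists>w. w 0 = a \<and> w k = b \<and> (\<forall>m<k. R (w m) (w (Suc m))))"

lemma wk_0: "wk R 0 a a"
  unfolding wk_def by (rule exI[of _ "\<lambda>_. a"]) simp

lemma wk_1: "R a b \<Longrightarrow> wk R 1 a b"
  unfolding wk_def by (rule exI[of _ "\<lambda>m. if m = 0 then a else b"]) simp

lemma wk_trans:
  assumes "wk R k a b" "wk R l b c" shows "wk R (k + l) a c"
proof -
  obtain w1 where w1: "w1 0 = a" "w1 k = b" "\<forall>m<k. R (w1 m) (w1 (Suc m))"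
    using assms(1) unfolding wk_def by blast
  obtain w2 where w2: "w2 0 = b" "w2 l = c" "\<forall>m<l. R (w2 m) (w2 (Suc m))"
    using assms(2) unfolding wk_def by blast
  define w where "w m = (if m \<le> k then w1 m else w2 (m - k))" for m
  have "w 0 = a" using w1 by (simp add: w_def)
  moreover have "w (k + l) = c" using w1 w2 by (cases "l = 0") (auto simp: w_def)
  moreover have "R (w m) (w (Suc m))" if "m < k + l" for m
  proof (cases "Suc m \<le> k")
    case True then show ?thesis using w1 by (simp add: w_def)
  next
    case False
    then have "m \<ge> k" by simp
    then have "R (w2 (m - k)) (w2 (Suc (m - k)))" using w2 that by simp
    moreover have "Suc m - k = Suc (m - k)" using \<open>m \<ge> k\<close> by simp
    ultimately show ?thesis using False w1 w2 \<open>m \<ge> k\<close>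
      by (cases "m = k") (auto simp: w_def)
  qed
  ultimately show ?thesis unfolding wk_def by blast
qed

lemma wk_rev:
  assumes sym: "\<forall>x y. R x y \<longrightarrow> R y x" and "wk R k a b" shows "wk R k b a"
proof -
  obtain w where w: "w 0 = a" "w k = b" "\<forall>m<k. R (w m) (w (Suc m))"
    using assms(2) unfolding wk_def by blast
  have "R (w (k - m)) (w (k - Suc m))" if "m < k" for m
  proof -
    have "R (w (k - Suc m)) (w (Suc (k - Suc m)))" using w that by simp
    moreover have "Suc (k - Suc m) = k - m" using that by simp
    ultimately show ?thesis using sym by metis
  qed
  then show ?thesis unfolding wk_def using w
    by (intro exI[of _ "\<lambda>m. w (k - m)"]) auto
qed

lemma rtranclp_wk: "R\<^sup>*\<^sup>* a b \<Longrightarrow> \<exists>k. wk R k a b"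
proof (induction rule: rtranclp_induct)
  case base then show ?case using wk_0 by blast
next
  case (step y z)
  then obtain k where "wk R k a y" by blast
  then have "wk R (k + 1) a z" using wk_trans wk_1 step by blast
  then show ?case by blast
qed

lemma wk_short:
  assumes bd: "\<forall>x y. R x y \<longrightarrow> x < r \<and> y < r" and r: "r \<ge> 1"
  shows "wk R k a b \<Longrightarrow> \<exists>k'. k' < 2 * r \<and> even k' = even k \<and> wk R k' a b"
proof (induction k rule: less_induct)
  case (less k)
  show ?case
  proof (cases "k < 2 * r")
    case True then show ?thesis using less.prems by blast
  next
    case False
    obtain w where w: "w 0 = a" "w k = b" "\<forall>m<k. R (w m) (w (Suc m))"
      using less.prems unfolding wk_def by blast
    have kpos: "k > 0" using False r by simp
    have wr: "w m < r" if "m \<le> k" for m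
    proof (cases "m < k")
      case True then show ?thesis using w bd by blast
    next
      case False
      then have "m = k" using that by simp
      have "k - 1 < k" using kpos by simp
      then have "R (w (k - 1)) (w (Suc (k - 1)))" using w(3) by blast
      moreover have "Suc (k - 1) = k" using kpos by simp
      ultimately show ?thesis using bd \<open>m = k\<close> w by metis
    qed
    define f where "f m = (w m, even m)" for m
    have img: "f ` {..k} \<subseteq> {..<r} \<times> (UNIV :: bool set)" using wr by (auto simp: f_def)
    have "card ({..<r} \<times> (UNIV :: bool set)) = 2 * r" by (simp add: card_cartesian_product)
    moreover have "card {..k} = k + 1" by simp
    ultimately have "\<not> inj_on f {..k}"
      using card_inj_on_le[OF _ img] False by fastforce
    then obtain p q where pq: "p \<le> k" "q \<le> k" "p \<noteq> q" "f p = f q"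
      unfolding inj_on_def by auto
    obtain p q where pq: "p < q" "q \<le> k" "w p = w q" "even p = even q"
    proof (cases "p < q")
      case True then show ?thesis using pq that[of p q] by (simp add: f_def)
    next
      case False then show ?thesis using pq that[of q p] by (simp add: f_def)
    qed
    define k' where "k' = k - (q - p)"
    define w' where "w' m = (if m \<le> p then w m else w (m + (q - p)))" for m
    have k'lt: "k' < k" using pq unfolding k'_def by simp
    have par: "even k' = even k"
    proof -
      have "even (q - p)" using pq by auto
      then show ?thesis unfolding k'_def using pq by auto
    qed
    have "w' 0 = a" using w by (simp add: w'_def)
    moreover have "w' k' = b"
    proof (cases "k' \<le> p")
      case True
      then have "q = k" using pq unfolding k'_def by simp
      then show ?thesis using True pq w unfolding w'_def k'_def by auto
    next
      case False then show ?thesis using pq w unfolding w'_def k'_def by auto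
    qed
    moreover have "R (w' m) (w' (Suc m))" if "m < k'" for m
    proof -
      consider "m < p" | "m = p" | "m > p" by linarith
      then show ?thesis
      proof cases
        case 1 then show ?thesis using w pq unfolding w'_def by auto
      next
        case 2
        have "q < k" using that 2 pq unfolding k'_def by simp
        then have "R (w q) (w (Suc q))" using w by simp
        moreover have "Suc p + (q - p) = Suc q" using pq by simp
        ultimately show ?thesis using 2 pq unfolding w'_def by simp
      next
        case 3
        have "m + (q - p) < k" using that pq unfolding k'_def by simp
        then have "R (w (m + (q - p))) (w (Suc (m + (q - p))))" using w by simp
        then show ?thesis using 3 unfolding w'_def by simp
      qed
    qed
    ultimately have "wk R k' a b" unfolding wk_def by blast
    then obtain k'' where "k'' < 2 * r" "even k'' = even k'" "wk R k'' a b"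
      using less.IH[OF k'lt] by blast
    then show ?thesis using par by auto
  qed
qed

lemma wk_pad2:
  assumes "R j u" "R u j" shows "wk R (2 * t) j j"
proof (induction t)
  case 0 then show ?case using wk_0 by simp
next
  case (Suc t)
  have "wk R 2 j j" using wk_trans[OF wk_1[of R, OF assms(1)] wk_1[of R, OF assms(2)]] by (simp add: numeral_2_eq_2)
  from wk_trans[OF Suc this] show ?case by simp
qed

lemma odd_walks:
  assumes sym: "\<forall>x y. R x y \<longrightarrow> R y x" and bd: "\<forall>x y. R x y \<longrightarrow> x < r \<and> y < r"
    and conn: "\<forall>i<r. \<forall>j<r. R\<^sup>*\<^sup>* i j"
    and nb: "\<not> (\<exists>f::nat \<Rightarrow> bool. \<forall>i<r. \<forall>j<r. R i j \<longrightarrow> f i \<noteq> f j)"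
  shows "r \<ge> 1" "\<forall>i<r. \<forall>j<r. wk R (2 * r - 1) i j"
proof -
  show r: "r \<ge> 1"
  proof (rule ccontr)
    assume "\<not> r \<ge> 1" then have "r = 0" by simp
    then show False using nb by auto
  qed
  have "\<exists>c. odd c \<and> wk R c 0 0"
  proof (rule ccontr)
    assume A: "\<not> (\<exists>c. odd c \<and> wk R c 0 0)"
    define f where "f i = (\<exists>k. even k \<and> wk R k 0 i)" for i
    have "\<forall>i<r. \<forall>j<r. R i j \<longrightarrow> f i \<noteq> f j"
    proof (intro allI impI)
      fix i j assume ij: "i < r" "j < r" "R i j"
      show "f i \<noteq> f j"
      proof
        assume eq: "f i = f j"
        show False
        proof (cases "f i")
          case True
          then obtain k1 k2 where k: "even k1" "wk R k1 0 i" "even k2" "wk R k2 0 j"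
            using eq unfolding f_def by auto
          have "wk R (k1 + 1 + k2) 0 0"
            using wk_trans[OF wk_trans[OF k(2) wk_1[of R, OF ij(3)]] wk_rev[OF sym k(4)]] .
          moreover have "odd (k1 + 1 + k2)" using k by simp
          ultimately show False using A by blast
        next
          case False
          obtain k1 where k1: "wk R k1 0 i" using rtranclp_wk conn ij r by (metis less_le_trans zero_less_one)
          obtain k2 where k2: "wk R k2 0 j" using rtranclp_wk conn ij r by (metis less_le_trans zero_less_one)
          have "odd k1" "odd k2" using False eq k1 k2 unfolding f_def by auto
          have "wk R (k1 + 1 + k2) 0 0"
            using wk_trans[OF wk_trans[OF k1 wk_1[of R, OF ij(3)]] wk_rev[OF sym k2]] .
          moreover have "odd (k1 + 1 + k2)" using \<open>odd k1\<close> \<open>odd k2\<close> by simp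
          ultimately show False using A by blast
        qed
      qed
    qed
    then show False using nb by blast
  qed
  then obtain c where c: "odd c" "wk R c 0 0" by blast
  show "\<forall>i<r. \<forall>j<r. wk R (2 * r - 1) i j"
  proof (intro allI impI)
    fix i j assume ij: "i < r" "j < r"
    have r0: "0 < r" using r by simp
    obtain p where p: "wk R p i 0" using rtranclp_wk conn ij r0 by blast
    obtain q where q: "wk R q 0 j" using rtranclp_wk conn ij r0 by blast
    have "\<exists>k. odd k \<and> wk R k i j"
    proof (cases "odd (p + q)")
      case True then show ?thesis using wk_trans[OF p q] by blast
    next
      case False
      then have "odd (p + c + q)" using c by auto
      then show ?thesis using wk_trans[OF wk_trans[OF p c(2)] q] by blast
    qed
    then obtain k where k: "odd k" "wk R k i j" by blast
    obtain k' where k': "k' < 2 * r" "odd k'" "wk R k' i j"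
      using wk_short[OF bd r k(2)] k(1) by auto
    obtain w where w: "w 0 = i" "w k' = j" "\<forall>m<k'. R (w m) (w (Suc m))"
      using k'(3) unfolding wk_def by blast
    have "k' > 0" using k' by (cases k') auto
    then have "k' - 1 < k'" by simp
    then have "R (w (k' - 1)) (w (Suc (k' - 1)))" using w(3) by blast
    then have Ru: "R (w (k' - 1)) j" using w \<open>k' > 0\<close> by simp
    have "even (2 * r - 1 - k')" using k' r by auto
    then obtain t where t: "2 * r - 1 - k' = 2 * t" unfolding dvd_def by blast
    have "wk R (k' + 2 * t) i j"
      using wk_trans[OF k'(3) wk_pad2[of R, OF sym[rule_format, OF Ru] Ru]] .
    moreover have "k' + 2 * t = 2 * r - 1" using t k' by simp
    ultimately show "wk R (2 * r - 1) i j" by simp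
  qed
qed


lemma eb_sym:
  assumes "is_graph n E" shows "edges_between E A B = edges_between E B A"
proof -
  have "{(x, y). x \<in> B \<and> y \<in> A \<and> E x y} = prod.swap ` {(x, y). x \<in> A \<and> y \<in> B \<and> E x y}"
    using assms unfolding is_graph_def by (auto simp: image_iff)
  then show ?thesis unfolding edges_between_def
    by (simp add: card_image swap_inj_on)
qed

lemma dens_sym: "is_graph n E \<Longrightarrow> density E A B = density E B A"
  unfolding density_def using eb_sym by (simp add: mult.commute)

lemma reg_sym: "is_graph n E \<Longrightarrow> regular_pair E \<epsilon> A B \<Longrightarrow> regular_pair E \<epsilon> B A"
  unfolding regular_pair_def using dens_sym by metis

lemma rg_sym: "is_graph n E \<Longrightarrow> reduced_graph E V r \<epsilon> d i j \<Longrightarrow> reduced_graph E V r \<epsilon> d j i"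
  unfolding reduced_graph_def using reg_sym dens_sym by metis

lemma eb_sum:
  assumes "finite X" "finite Y"
  shows "edges_between E X Y = (\<Sum>x\<in>X. card {y \<in> Y. E x y})"
proof -
  have "{(x, y). x \<in> X \<and> y \<in> Y \<and> E x y} = Sigma X (\<lambda>x. {y \<in> Y. E x y})" by auto
  then show ?thesis unfolding edges_between_def using assms by simp
qed

lemma expand:
  assumes reg: "regular_pair E \<epsilon> A B" and dens: "density E A B \<ge> d"
    and fin: "finite A" "finite B" and Y: "Y \<subseteq> B" "real (card Y) \<ge> \<epsilon> * real (card B)" "card Y > 0"
    and eps: "\<epsilon> > 0"
  shows "real (card {a \<in> A. real (card {y \<in> Y. E a y}) \<ge> (d - \<epsilon>) * real (card Y)}) \<ge> (1 - \<epsilon>) * real (card A)"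
proof -
  define G where "G = {a \<in> A. real (card {y \<in> Y. E a y}) \<ge> (d - \<epsilon>) * real (card Y)}"
  define Bad where "Bad = A - G"
  have finY: "finite Y" using Y fin finite_subset by blast
  have BadA: "Bad \<subseteq> A" unfolding Bad_def by auto
  have finBad: "finite Bad" using BadA fin finite_subset by blast
  have cb: "real (card Bad) \<le> \<epsilon> * real (card A)"
  proof (rule ccontr)
    assume "\<not> ?thesis"
    then have big: "real (card Bad) > \<epsilon> * real (card A)" by simp
    moreover have "\<epsilon> * real (card A) \<ge> 0" using eps by simp
    ultimately have "card Bad > 0" by linarith
    then have "Bad \<noteq> {}" by auto
    have "\<bar>density E A B - density E Bad Y\<bar> \<le> \<epsilon>"
      using reg BadA Y big unfolding regular_pair_def by auto
    moreover have "density E Bad Y < d - \<epsilon>"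
    proof -
      have "real (edges_between E Bad Y) = (\<Sum>x\<in>Bad. real (card {y \<in> Y. E x y}))"
        using eb_sum[OF finBad finY] by simp
      also have "\<dots> < (\<Sum>x\<in>Bad. (d - \<epsilon>) * real (card Y))"
        using finBad \<open>Bad \<noteq> {}\<close>
        by (intro sum_strict_mono) (auto simp: Bad_def G_def)
      also have "\<dots> = (d - \<epsilon>) * (real (card Bad) * real (card Y))" by simp
      finally have "real (edges_between E Bad Y) < (d - \<epsilon>) * (real (card Bad) * real (card Y))" .
      moreover have "real (card Bad) * real (card Y) > 0"
        using \<open>Bad \<noteq> {}\<close> finBad Y by (simp add: card_gt_0_iff)
      ultimately show ?thesis unfolding density_def by (simp add: divide_less_eq)
    qed
    ultimately show False using dens by linarith
  qed
  have "G \<subseteq> A" unfolding G_def by auto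
  then have "card Bad = card A - card G" unfolding Bad_def using fin by (simp add: card_Diff_subset finite_subset)
  moreover have "card G \<le> card A" using \<open>G \<subseteq> A\<close> fin by (simp add: card_mono)
  ultimately have "real (card G) = real (card A) - real (card Bad)" by simp
  then show ?thesis using cb unfolding G_def by (simp add: algebra_simps)
qed


lemma count_paths:
  fixes K :: real
  assumes S: "\<forall>k\<le>L. S k \<subseteq> {..<n}"
    and ext: "\<forall>k<L. \<forall>a\<in>S k. real (card {y \<in> S (Suc k). E a y}) \<ge> K"
    and KL: "real L \<le> K"
  shows "real (card (paths_between n E L X (S L))) \<ge> real (card (X \<inter> S 0)) * (K - real L) ^ L"
proof -
  define P where "P m = {p. length p = Suc m \<and> distinct p \<and> (\<forall>k\<le>m. p ! k \<in> S k)
      \<and> (\<forall>k<m. E (p ! k) (p ! Suc k)) \<and> hd p \<in> X}" for m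
  have finP: "finite (P m)" if "m \<le> L" for m
  proof -
    have "P m \<subseteq> {xs. set xs \<subseteq> {..<n} \<and> length xs = Suc m}"
    proof
      fix p assume p: "p \<in> P m"
      have "set p \<subseteq> {..<n}"
      proof
        fix x assume "x \<in> set p"
        then obtain k where k: "k < length p" "p ! k = x" by (auto simp: in_set_conv_nth)
        have "length p = Suc m" "\<forall>k\<le>m. p ! k \<in> S k" using p unfolding P_def by auto
        then have "x \<in> S k" "k \<le> L" using k that by auto
        then show "x \<in> {..<n}" using S by blast
      qed
      then show "p \<in> {xs. set xs \<subseteq> {..<n} \<and> length xs = Suc m}" using p unfolding P_def by simp
    qed
    then show ?thesis using finite_lists_length_eq[of "{..<n}"] finite_subset by blast
  qed
  have main: "m \<le> L \<Longrightarrow> real (card (P m)) \<ge> real (card (X \<inter> S 0)) * (K - real L) ^ m" for m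
  proof (induction m)
    case 0
    have "P 0 = (\<lambda>x. [x]) ` (X \<inter> S 0)"
    proof
      show "P 0 \<subseteq> (\<lambda>x. [x]) ` (X \<inter> S 0)"
      proof
        fix p assume "p \<in> P 0"
        then have p: "length p = 1" "p ! 0 \<in> S 0" "hd p \<in> X" unfolding P_def by auto
        then obtain x where "p = [x]" by (metis One_nat_def length_0_conv length_Suc_conv)
        then have "p = [x]" "x \<in> X" "x \<in> S 0" using p by auto
        then show "p \<in> (\<lambda>x. [x]) ` (X \<inter> S 0)" by auto
      qed
      show "(\<lambda>x. [x]) ` (X \<inter> S 0) \<subseteq> P 0" unfolding P_def by auto
    qed
    then have "card (P 0) = card (X \<inter> S 0)" by (simp add: card_image inj_on_def)
    then show ?case by simp
  next
    case (Suc m)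
    then have mL: "m < L" by simp
    define F where "F p = {y \<in> S (Suc m). E (last p) y} - set p" for p
    have Fb: "real (card (F p)) \<ge> K - real L" if p: "p \<in> P m" for p
    proof -
      have "length p = Suc m" using p unfolding P_def by simp
      then have lp: "last p = p ! m" by (subst last_conv_nth) auto
      have "last p \<in> S m" using p lp unfolding P_def by simp
      then have c1: "real (card {y \<in> S (Suc m). E (last p) y}) \<ge> K" using ext mL by blast
      have "card {y \<in> S (Suc m). E (last p) y} - card (set p) \<le> card (F p)"
        unfolding F_def by (rule diff_card_le_card_Diff) simp
      then have "real (card (F p)) \<ge> real (card {y \<in> S (Suc m). E (last p) y}) - real (card (set p))"
        by linarith
      moreover have "card (set p) = Suc m" using p unfolding P_def by (simp add: distinct_card)
      ultimately show ?thesis using c1 mL by simp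
    qed
    have finF: "finite (F p)" for p
    proof -
      have "F p \<subseteq> S (Suc m)" unfolding F_def by auto
      then show ?thesis using S Suc.prems finite_subset by (meson finite_lessThan)
    qed
    have "real (card (Sigma (P m) F)) = (\<Sum>p\<in>P m. real (card (F p)))"
      using finP[of m] mL finF by simp
    also have "\<dots> \<ge> (\<Sum>p\<in>P m. K - real L)" using Fb by (intro sum_mono) auto
    finally have c2: "real (card (Sigma (P m) F)) \<ge> real (card (P m)) * (K - real L)" by simp
    have inj: "inj_on (\<lambda>(p, v). p @ [v]) (Sigma (P m) F)"
      by (auto simp: inj_on_def)
    have img: "(\<lambda>(p, v). p @ [v]) ` (Sigma (P m) F) \<subseteq> P (Suc m)"
    proof
      fix q assume "q \<in> (\<lambda>(p, v). p @ [v]) ` (Sigma (P m) F)"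
      then obtain p v where pv: "p \<in> P m" "v \<in> F p" "q = p @ [v]" by auto
      have lp: "length p = Suc m" using pv unfolding P_def by simp
      have lastp: "last p = p ! m" using lp by (subst last_conv_nth) auto
      have "length q = Suc (Suc m)" using pv lp by simp
      moreover have "distinct q" using pv unfolding P_def F_def by simp
      moreover have "\<forall>k\<le>Suc m. q ! k \<in> S k"
      proof (intro allI impI)
        fix k assume "k \<le> Suc m"
        then consider "k \<le> m" | "k = Suc m" by linarith
        then show "q ! k \<in> S k"
        proof cases
          case 1 then show ?thesis using pv lp unfolding P_def by (simp add: nth_append)
        next
          case 2 then show ?thesis using pv lp unfolding F_def by (simp add: nth_append)
        qed
      qed
      moreover have "\<forall>k<Suc m. E (q ! k) (q ! Suc k)"
      proof (intro allI impI)
        fix k assume "k < Suc m"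
        then consider "k < m" | "k = m" by linarith
        then show "E (q ! k) (q ! Suc k)"
        proof cases
          case 1 then show ?thesis using pv lp unfolding P_def by (simp add: nth_append)
        next
          case 2 then show ?thesis using pv lp lastp unfolding F_def by (simp add: nth_append)
        qed
      qed
      moreover have "hd q \<in> X" using pv lp unfolding P_def by (cases p) auto
      ultimately show "q \<in> P (Suc m)" unfolding P_def by blast
    qed
    have "card (Sigma (P m) F) \<le> card (P (Suc m))"
      using card_inj_on_le[OF inj img finP[OF Suc.prems]] .
    then have "real (card (P (Suc m))) \<ge> real (card (P m)) * (K - real L)" using c2 by linarith
    moreover have "real (card (P m)) * (K - real L) \<ge> real (card (X \<inter> S 0)) * (K - real L) ^ m * (K - real L)"
      using Suc.IH mL KL by (intro mult_right_mono) auto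
    ultimately show ?case by (simp add: algebra_simps)
  qed
  have "P L \<subseteq> paths_between n E L X (S L)"
  proof
    fix p assume p: "p \<in> P L"
    have "set p \<subseteq> {..<n}"
    proof
      fix x assume "x \<in> set p"
      then obtain k where k: "k < length p" "p ! k = x" by (auto simp: in_set_conv_nth)
      have "length p = Suc L" "\<forall>k\<le>L. p ! k \<in> S k" using p unfolding P_def by auto
      then have "x \<in> S k" "k \<le> L" using k by auto
      then show "x \<in> {..<n}" using S by blast
    qed
    moreover have "length p = Suc L" using p unfolding P_def by simp
    then have "last p = p ! L" by (subst last_conv_nth) auto
    ultimately show "p \<in> paths_between n E L X (S L)" using p unfolding P_def paths_between_def by auto
  qed
  moreover have "finite (paths_between n E L X (S L))"
  proof -
    have "paths_between n E L X (S L) \<subseteq> {xs. set xs \<subseteq> {..<n} \<and> length xs = L + 1}"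
      unfolding paths_between_def by auto
    then show ?thesis using finite_lists_length_eq[of "{..<n}"] finite_subset by blast
  qed
  ultimately have "card (P L) \<le> card (paths_between n E L X (S L))" by (simp add: card_mono)
  then show ?thesis using main[of L] by linarith
qed


primrec Zs :: "(nat \<Rightarrow> nat \<Rightarrow> bool) \<Rightarrow> (nat \<Rightarrow> nat set) \<Rightarrow> real \<Rightarrow> nat set \<Rightarrow> nat \<Rightarrow> nat set" where
  "Zs E U c Y 0 = Y"
| "Zs E U c Y (Suc k) = {a \<in> U (Suc k). real (card {y \<in> Zs E U c Y k. E a y}) \<ge> c * real (card (Zs E U c Y k))}"

lemma core:
  fixes d \<epsilon> :: real and r n :: nat
  assumes d: "0 < d" "d \<le> 1" and eps: "0 < \<epsilon>" "\<epsilon> \<le> d / 4" and r: "r \<ge> 1"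
    and nb1: "real n \<ge> 16 * real r ^ 2 / d ^ 2" and nb2: "n \<ge> 2 * r"
    and G: "is_graph n E" and disj: "\<forall>i<r. \<forall>j<r. i \<noteq> j \<longrightarrow> V i \<inter> V j = {}"
    and cover: "(\<Union>i<r. V i) = {..<n}" and bal: "\<forall>i<r. \<forall>j<r. card (V i) \<le> card (V j) + 1"
    and conn: "connected_on r (reduced_graph E V r \<epsilon> d)"
    and nbip: "\<not> bipartite_on r (reduced_graph E V r \<epsilon> d)"
    and ij: "i < r" "j < r" and X: "X \<subseteq> V i" "real (card X) \<ge> d * real (card (V i))"
    and Y: "Y \<subseteq> V j" "real (card Y) \<ge> d * real (card (V j))"
  shows "real (card (paths_between n E (2 * r - 1) X Y)) \<ge> (d ^ 2 / (8 * r)) ^ (2 * r) * real n ^ (2 * r)"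
proof -
  define R where "R = reduced_graph E V r \<epsilon> d"
  have sym: "\<forall>x y. R x y \<longrightarrow> R y x" using rg_sym[OF G] unfolding R_def by blast
  have bd: "\<forall>x y. R x y \<longrightarrow> x < r \<and> y < r" unfolding R_def reduced_graph_def by blast
  have conn': "\<forall>i<r. \<forall>j<r. R\<^sup>*\<^sup>* i j" using conn unfolding R_def connected_on_def .
  have nb': "\<not> (\<exists>f::nat \<Rightarrow> bool. \<forall>i<r. \<forall>j<r. R i j \<longrightarrow> f i \<noteq> f j)"
    using nbip unfolding R_def bipartite_on_def .
  define L where "L = 2 * r - 1"
  have "wk R L i j" using odd_walks(2)[OF sym bd conn' nb'] ij unfolding L_def by blast
  then obtain w where w: "w 0 = i" "w L = j" "\<forall>m<L. R (w m) (w (Suc m))"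
    unfolding wk_def by blast
  have L1: "L \<ge> 1" "L + 1 = 2 * r" using r unfolding L_def by auto
  have wr: "w m < r" if "m \<le> L" for m
  proof (cases "m < L")
    case True then show ?thesis using w bd by blast
  next
    case False then show ?thesis using that w ij by simp
  qed
  have sub: "V k \<subseteq> {..<n}" if "k < r" for k using cover that by blast
  have fin: "finite (V k)" if "k < r" for k using sub[OF that] finite_subset by blast
  define t where "t = real n / (2 * real r)"
  have tpos: "t \<ge> 1" using nb2 r unfolding t_def by (simp add: field_simps)
  have size: "real (card (V k)) \<ge> t" if "k < r" for k
  proof -
    have "n = card (\<Union>i<r. V i)" using cover by simp
    also have "\<dots> = (\<Sum>i<r. card (V i))"
      using fin disj by (intro card_UN_disjoint) auto
    also have "\<dots> \<le> (\<Sum>i<r. card (V k) + 1)" using bal that by (intro sum_mono) auto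
    also have "\<dots> = r * (card (V k) + 1)" by simp
    finally have "real n \<le> real (r * (card (V k) + 1))" by (simp only: of_nat_le_iff)
    then have "real n \<le> real r * (real (card (V k)) + 1)" by (simp add: algebra_simps)
    then have "real n / real r \<le> real (card (V k)) + 1" using r by (simp add: divide_le_eq mult.commute)
    moreover have "t = real n / real r / 2" unfolding t_def by simp
    ultimately show ?thesis using tpos by linarith
  qed
  define U where "U k = V (w (L - k))" for k
  define Z where "Z = Zs E U (d - \<epsilon>) Y"
  have eps2: "\<epsilon> \<le> 3 / 4 * d" using eps d by simp
  have inv: "k \<le> L \<longrightarrow> Z k \<subseteq> U k \<and> real (card (Z k)) \<ge> 3 / 4 * d * real (card (U k))
      \<and> (0 < k \<longrightarrow> real (card (Z k)) \<ge> (1 - \<epsilon>) * real (card (U k)))" for k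
  proof (induction k)
    case 0
    have "U 0 = V j" unfolding U_def using w by simp
    moreover have "3 / 4 * d * real (card (V j)) \<le> d * real (card (V j))" using d by simp
    ultimately show ?case using Y unfolding Z_def by auto
  next
    case (Suc k)
    show ?case
    proof
      assume k: "Suc k \<le> L"
      define m where "m = L - Suc k"
      have m: "m < L" "Suc m = L - k" using k unfolding m_def by auto
      have UA: "U (Suc k) = V (w m)" unfolding U_def m_def using k by (simp add: diff_diff_cancel)
      have UB: "U k = V (w (Suc m))" unfolding U_def using m by (simp add: diff_diff_cancel)
      have Rm: "R (w m) (w (Suc m))" using w m by blast
      then have reg: "regular_pair E \<epsilon> (U (Suc k)) (U k)" "density E (U (Suc k)) (U k) \<ge> d"
        using UA UB unfolding R_def reduced_graph_def by auto
      have wm: "w m < r" "w (Suc m) < r" using Rm bd by auto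
      have finA: "finite (U (Suc k))" "finite (U k)" using UA UB fin wm by auto
      have IH: "Z k \<subseteq> U k" "real (card (Z k)) \<ge> 3 / 4 * d * real (card (U k))"
        using Suc.IH k by auto
      have cB: "real (card (U k)) \<ge> t" using UB size wm by simp
      have "\<epsilon> * real (card (U k)) \<le> 3 / 4 * d * real (card (U k))"
        using eps2 by (intro mult_right_mono) auto
      then have c1: "real (card (Z k)) \<ge> \<epsilon> * real (card (U k))" using IH by linarith
      have "3 / 4 * d * real (card (U k)) > 0" using d cB tpos by simp
      then have c2: "card (Z k) > 0" using IH by linarith
      have ex: "real (card {a \<in> U (Suc k). real (card {y \<in> Z k. E a y}) \<ge> (d - \<epsilon>) * real (card (Z k))})
          \<ge> (1 - \<epsilon>) * real (card (U (Suc k)))"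
        by (rule expand[OF reg finA IH(1) c1 c2 eps(1)])
      have ZS: "Z (Suc k) = {a \<in> U (Suc k). real (card {y \<in> Z k. E a y}) \<ge> (d - \<epsilon>) * real (card (Z k))}"
        unfolding Z_def by simp
      have "3 / 4 * d * real (card (U (Suc k))) \<le> (1 - \<epsilon>) * real (card (U (Suc k)))"
        using eps d by (intro mult_right_mono) auto
      then show "Z (Suc k) \<subseteq> U (Suc k) \<and> 3 / 4 * d * real (card (U (Suc k))) \<le> real (card (Z (Suc k)))
          \<and> (0 < Suc k \<longrightarrow> (1 - \<epsilon>) * real (card (U (Suc k))) \<le> real (card (Z (Suc k))))"
        using ex ZS by auto
    qed
  qed
  define S where "S m = Z (L - m)" for m
  have US: "U (L - m) = V (w m)" if "m \<le> L" for m unfolding U_def using that by (simp add: diff_diff_cancel)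
  have Ssub: "\<forall>k\<le>L. S k \<subseteq> {..<n}"
  proof (intro allI impI)
    fix k assume "k \<le> L"
    then have "S k \<subseteq> V (w k)" using inv[of "L - k"] US unfolding S_def by auto
    then show "S k \<subseteq> {..<n}" using sub wr \<open>k \<le> L\<close> by blast
  qed
  define K where "K = 9 / 16 * d ^ 2 * t"
  have ext: "\<forall>k<L. \<forall>a\<in>S k. real (card {y \<in> S (Suc k). E a y}) \<ge> K"
  proof (intro allI impI ballI)
    fix k a assume k: "k < L" and a: "a \<in> S k"
    have e1: "L - k = Suc (L - Suc k)" using k by simp
    have "a \<in> Z (Suc (L - Suc k))" using a e1 unfolding S_def by simp
    then have "real (card {y \<in> Z (L - Suc k). E a y}) \<ge> (d - \<epsilon>) * real (card (Z (L - Suc k)))"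
      unfolding Z_def by simp
    moreover have "Z (L - Suc k) = S (Suc k)" unfolding S_def by simp
    ultimately have c1: "real (card {y \<in> S (Suc k). E a y}) \<ge> (d - \<epsilon>) * real (card (S (Suc k)))" by simp
    have "real (card (S (Suc k))) \<ge> 3 / 4 * d * real (card (V (w (Suc k))))"
      using inv[of "L - Suc k"] US[of "Suc k"] k unfolding S_def by auto
    moreover have "real (card (V (w (Suc k)))) \<ge> t" using size wr k by simp
    moreover have "3 / 4 * d * t \<le> 3 / 4 * d * real (card (V (w (Suc k))))"
      using d calculation(2) by (intro mult_left_mono) auto
    ultimately have "real (card (S (Suc k))) \<ge> 3 / 4 * d * t" by linarith
    moreover have "d - \<epsilon> \<ge> 3 / 4 * d" using eps by simp
    ultimately have "(d - \<epsilon>) * real (card (S (Suc k))) \<ge> (3 / 4 * d) * (3 / 4 * d * t)"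
      using d tpos by (intro mult_mono) auto
    moreover have "(3 / 4 * d) * (3 / 4 * d * t) = K" unfolding K_def by (simp add: power2_eq_square)
    ultimately show "real (card {y \<in> S (Suc k). E a y}) \<ge> K" using c1 by linarith
  qed
  have "d ^ 2 * real n \<ge> 16 * real r ^ 2" using nb1 d by (simp add: divide_le_eq mult.commute)
  then have dt: "d ^ 2 * t \<ge> 8 * real r" unfolding t_def using r
    by (simp add: field_simps power2_eq_square)
  define c where "c = d ^ 2 * t / 4"
  have cpos: "c \<ge> 0" unfolding c_def using tpos by simp
  have KLc: "K - real L \<ge> c"
  proof -
    have "real L \<le> 2 * real r" unfolding L_def by simp
    moreover have "K = 9 / 16 * (d ^ 2 * t)" "c = (d ^ 2 * t) / 4" unfolding K_def c_def by simp_all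
    ultimately show ?thesis using dt r by linarith
  qed
  then have KL: "real L \<le> K" using cpos by simp
  have SL: "S L = Y" unfolding S_def Z_def by simp
  have S0: "S 0 \<subseteq> V i" "real (card (S 0)) \<ge> (1 - \<epsilon>) * real (card (V i))"
    using inv[of L] L1 US[of 0] w unfolding S_def by auto
  have K0: "real (card (X \<inter> S 0)) \<ge> c"
  proof -
    have "X \<subseteq> (X \<inter> S 0) \<union> (V i - S 0)" using X by auto
    moreover have "finite ((X \<inter> S 0) \<union> (V i - S 0))" using fin[OF ij(1)] X by (simp add: finite_subset)
    ultimately have "card X \<le> card ((X \<inter> S 0) \<union> (V i - S 0))" by (simp add: card_mono)
    also have "\<dots> \<le> card (X \<inter> S 0) + card (V i - S 0)" by (rule card_Un_le)
    finally have "card X \<le> card (X \<inter> S 0) + card (V i - S 0)" .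
    moreover have "card (V i - S 0) = card (V i) - card (S 0)" using S0 fin ij by (simp add: card_Diff_subset finite_subset)
    moreover have "card (S 0) \<le> card (V i)" using S0 fin ij by (simp add: card_mono)
    ultimately have "real (card (X \<inter> S 0)) \<ge> real (card X) - real (card (V i)) + real (card (S 0))" by simp
    then have "real (card (X \<inter> S 0)) \<ge> (d - \<epsilon>) * real (card (V i))" using X S0 by (simp add: algebra_simps)
    moreover have "(d - \<epsilon>) * real (card (V i)) \<ge> (3 / 4 * d) * t"
      using size[OF ij(1)] eps d tpos by (intro mult_mono) auto
    moreover have "(3 / 4 * d) * t \<ge> c"
    proof -
      have "d ^ 2 \<le> 3 * d" using d by (simp add: power2_eq_square)
      then have "d ^ 2 * t \<le> (3 * d) * t" using tpos by (intro mult_right_mono) auto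
      then show ?thesis unfolding c_def by simp
    qed
    ultimately show ?thesis by linarith
  qed
  have "real (card (paths_between n E L X (S L))) \<ge> real (card (X \<inter> S 0)) * (K - real L) ^ L"
    by (rule count_paths[OF Ssub ext KL])
  moreover have "real (card (X \<inter> S 0)) * (K - real L) ^ L \<ge> c * c ^ L"
    using K0 KLc cpos by (intro mult_mono power_mono) auto
  moreover have "c * c ^ L = (d ^ 2 / (8 * r)) ^ (2 * r) * real n ^ (2 * r)"
  proof -
    have "c * c ^ L = c ^ (Suc L)" by simp
    also have "Suc L = 2 * r" using L1 by simp
    finally have "c * c ^ L = c ^ (2 * r)" .
    moreover have ceq: "c = d ^ 2 / (8 * r) * real n" unfolding c_def t_def by (simp add: field_simps)
    have "c ^ (2 * r) = (d ^ 2 / (8 * r)) ^ (2 * r) * real n ^ (2 * r)" unfolding ceq by (rule power_mult_distrib)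
    ultimately show ?thesis by simp
  qed
  ultimately show ?thesis using SL unfolding L_def by simp
qed


theorem lemma2p12:
  "\<forall>d::real. 0 < d \<and> d \<le> 1 \<longrightarrow>
   (\<exists>\<epsilon>0>0. \<forall>\<epsilon>::real. 0 < \<epsilon> \<and> \<epsilon> \<le> \<epsilon>0 \<longrightarrow>
   (\<exists>r0::nat. \<forall>r\<ge>r0.
   (\<exists>\<zeta>0>0. \<forall>\<zeta>::real. 0 < \<zeta> \<and> \<zeta> \<le> \<zeta>0 \<longrightarrow>
   (\<exists>n0::nat. \<forall>n\<ge>n0. \<forall>(E :: nat \<Rightarrow> nat \<Rightarrow> bool) (V :: nat \<Rightarrow> nat set).
      is_graph n E \<and>
      (\<forall>i<r. \<forall>j<r. i \<noteq> j \<longrightarrow> V i \<inter> V j = {}) \<and>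
      (\<Union>i<r. V i) = {..<n} \<and>
      (\<forall>i<r. \<forall>j<r. card (V i) \<le> card (V j) + 1) \<and>
      connected_on r (reduced_graph E V r \<epsilon> d) \<and>
      \<not> bipartite_on r (reduced_graph E V r \<epsilon> d)
      \<longrightarrow>
      (\<exists>L::nat. odd L \<and> L \<le> 2 * r \<and>
        (\<forall>i<r. \<forall>j<r. \<forall>X Y. X \<subseteq> V i \<and> real (card X) \<ge> d * real (card (V i)) \<and>
                            Y \<subseteq> V j \<and> real (card Y) \<ge> d * real (card (V j)) \<longrightarrow>
           real (card (paths_between n E L X Y)) \<ge> \<zeta> * real n ^ (L + 1)))))))"
proof (intro allI impI)
  fix d :: real assume d: "0 < d \<and> d \<le> 1"
  show "\<exists>\<epsilon>0>0. \<forall>\<epsilon>::real. 0 < \<epsilon> \<and> \<epsilon> \<le> \<epsilon>0 \<longrightarrow>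
   (\<exists>r0::nat. \<forall>r\<ge>r0.
   (\<exists>\<zeta>0>0. \<forall>\<zeta>::real. 0 < \<zeta> \<and> \<zeta> \<le> \<zeta>0 \<longrightarrow>
   (\<exists>n0::nat. \<forall>n\<ge>n0. \<forall>(E :: nat \<Rightarrow> nat \<Rightarrow> bool) (V :: nat \<Rightarrow> nat set).
      is_graph n E \<and>
      (\<forall>i<r. \<forall>j<r. i \<noteq> j \<longrightarrow> V i \<inter> V j = {}) \<and>
      (\<Union>i<r. V i) = {..<n} \<and>
      (\<forall>i<r. \<forall>j<r. card (V i) \<le> card (V j) + 1) \<and>
      connected_on r (reduced_graph E V r \<epsilon> d) \<and>
      \<not> bipartite_on r (reduced_graph E V r \<epsilon> d)
      \<longrightarrow>
      (\<exists>L::nat. odd L \<and> L \<le> 2 * r \<and>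
        (\<forall>i<r. \<forall>j<r. \<forall>X Y. X \<subseteq> V i \<and> real (card X) \<ge> d * real (card (V i)) \<and>
                            Y \<subseteq> V j \<and> real (card Y) \<ge> d * real (card (V j)) \<longrightarrow>
           real (card (paths_between n E L X Y)) \<ge> \<zeta> * real n ^ (L + 1))))))"
  proof (rule exI[of _ "d / 4"], intro conjI allI impI)
    show "d / 4 > 0" using d by simp
    fix \<epsilon> :: real assume eps: "0 < \<epsilon> \<and> \<epsilon> \<le> d / 4"
    show "\<exists>r0::nat. \<forall>r\<ge>r0.
   (\<exists>\<zeta>0>0. \<forall>\<zeta>::real. 0 < \<zeta> \<and> \<zeta> \<le> \<zeta>0 \<longrightarrow>
   (\<exists>n0::nat. \<forall>n\<ge>n0. \<forall>(E :: nat \<Rightarrow> nat \<Rightarrow> bool) (V :: nat \<Rightarrow> nat set).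
      is_graph n E \<and>
      (\<forall>i<r. \<forall>j<r. i \<noteq> j \<longrightarrow> V i \<inter> V j = {}) \<and>
      (\<Union>i<r. V i) = {..<n} \<and>
      (\<forall>i<r. \<forall>j<r. card (V i) \<le> card (V j) + 1) \<and>
      connected_on r (reduced_graph E V r \<epsilon> d) \<and>
      \<not> bipartite_on r (reduced_graph E V r \<epsilon> d)
      \<longrightarrow>
      (\<exists>L::nat. odd L \<and> L \<le> 2 * r \<and>
        (\<forall>i<r. \<forall>j<r. \<forall>X Y. X \<subseteq> V i \<and> real (card X) \<ge> d * real (card (V i)) \<and>
                            Y \<subseteq> V j \<and> real (card Y) \<ge> d * real (card (V j)) \<longrightarrow>
           real (card (paths_between n E L X Y)) \<ge> \<zeta> * real n ^ (L + 1)))))"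
    proof (rule exI[of _ 1], intro allI impI)
      fix r :: nat assume r: "r \<ge> 1"
      define z0 where "z0 = (d ^ 2 / (8 * real r)) ^ (2 * r)"
      have z0pos: "z0 > 0" unfolding z0_def using d r by simp
      show "\<exists>\<zeta>0>0. \<forall>\<zeta>::real. 0 < \<zeta> \<and> \<zeta> \<le> \<zeta>0 \<longrightarrow>
   (\<exists>n0::nat. \<forall>n\<ge>n0. \<forall>(E :: nat \<Rightarrow> nat \<Rightarrow> bool) (V :: nat \<Rightarrow> nat set).
      is_graph n E \<and>
      (\<forall>i<r. \<forall>j<r. i \<noteq> j \<longrightarrow> V i \<inter> V j = {}) \<and>
      (\<Union>i<r. V i) = {..<n} \<and>
      (\<forall>i<r. \<forall>j<r. card (V i) \<le> card (V j) + 1) \<and>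
      connected_on r (reduced_graph E V r \<epsilon> d) \<and>
      \<not> bipartite_on r (reduced_graph E V r \<epsilon> d)
      \<longrightarrow>
      (\<exists>L::nat. odd L \<and> L \<le> 2 * r \<and>
        (\<forall>i<r. \<forall>j<r. \<forall>X Y. X \<subseteq> V i \<and> real (card X) \<ge> d * real (card (V i)) \<and>
                            Y \<subseteq> V j \<and> real (card Y) \<ge> d * real (card (V j)) \<longrightarrow>
           real (card (paths_between n E L X Y)) \<ge> \<zeta> * real n ^ (L + 1))))"
      proof (rule exI[of _ z0], intro conjI allI impI)
        show "z0 > 0" by (rule z0pos)
        fix \<zeta> :: real assume z: "0 < \<zeta> \<and> \<zeta> \<le> z0"
        define n0 where "n0 = 2 * r + nat \<lceil>16 * real r ^ 2 / d ^ 2\<rceil>"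
        show "\<exists>n0::nat. \<forall>n\<ge>n0. \<forall>(E :: nat \<Rightarrow> nat \<Rightarrow> bool) (V :: nat \<Rightarrow> nat set).
      is_graph n E \<and>
      (\<forall>i<r. \<forall>j<r. i \<noteq> j \<longrightarrow> V i \<inter> V j = {}) \<and>
      (\<Union>i<r. V i) = {..<n} \<and>
      (\<forall>i<r. \<forall>j<r. card (V i) \<le> card (V j) + 1) \<and>
      connected_on r (reduced_graph E V r \<epsilon> d) \<and>
      \<not> bipartite_on r (reduced_graph E V r \<epsilon> d)
      \<longrightarrow>
      (\<exists>L::nat. odd L \<and> L \<le> 2 * r \<and>
        (\<forall>i<r. \<forall>j<r. \<forall>X Y. X \<subseteq> V i \<and> real (card X) \<ge> d * real (card (V i)) \<and>
                            Y \<subseteq> V j \<and> real (card Y) \<ge> d * real (card (V j)) \<longrightarrow>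
           real (card (paths_between n E L X Y)) \<ge> \<zeta> * real n ^ (L + 1)))"
        proof (rule exI[of _ n0], intro allI impI)
          fix n :: nat and E :: "nat \<Rightarrow> nat \<Rightarrow> bool" and V :: "nat \<Rightarrow> nat set"
          assume n: "n \<ge> n0"
          assume H: "is_graph n E \<and>
            (\<forall>i<r. \<forall>j<r. i \<noteq> j \<longrightarrow> V i \<inter> V j = {}) \<and>
            (\<Union>i<r. V i) = {..<n} \<and>
            (\<forall>i<r. \<forall>j<r. card (V i) \<le> card (V j) + 1) \<and>
            connected_on r (reduced_graph E V r \<epsilon> d) \<and>
            \<not> bipartite_on r (reduced_graph E V r \<epsilon> d)"
          have nb2: "n \<ge> 2 * r" using n unfolding n0_def by simp
          have "real (nat \<lceil>16 * real r ^ 2 / d ^ 2\<rceil>) \<ge> 16 * real r ^ 2 / d ^ 2" by linarith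
          moreover have "real n \<ge> real (nat \<lceil>16 * real r ^ 2 / d ^ 2\<rceil>)" using n unfolding n0_def by simp
          ultimately have nb1: "real n \<ge> 16 * real r ^ 2 / d ^ 2" by linarith
          show "\<exists>L::nat. odd L \<and> L \<le> 2 * r \<and>
            (\<forall>i<r. \<forall>j<r. \<forall>X Y. X \<subseteq> V i \<and> real (card X) \<ge> d * real (card (V i)) \<and>
                            Y \<subseteq> V j \<and> real (card Y) \<ge> d * real (card (V j)) \<longrightarrow>
           real (card (paths_between n E L X Y)) \<ge> \<zeta> * real n ^ (L + 1))"
          proof (rule exI[of _ "2 * r - 1"], intro conjI allI impI)
            show "odd (2 * r - 1)" using r by simp
            show "2 * r - 1 \<le> 2 * r" by simp
            fix i j X Y assume ij: "i < r" "j < r"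
            assume XY: "X \<subseteq> V i \<and> real (card X) \<ge> d * real (card (V i)) \<and>
                            Y \<subseteq> V j \<and> real (card Y) \<ge> d * real (card (V j))"
            have c0: "real (card (paths_between n E (2 * r - 1) X Y)) \<ge> (d ^ 2 / (8 * r)) ^ (2 * r) * real n ^ (2 * r)"
              using H ij XY d eps by (intro core[of d \<epsilon> r n E V i j X Y]) (simp_all add: nb1 nb2 r)
            then have c: "real (card (paths_between n E (2 * r - 1) X Y)) \<ge> z0 * real n ^ (2 * r)"
              unfolding z0_def by simp
            have "\<zeta> * real n ^ (2 * r) \<le> z0 * real n ^ (2 * r)"
              using z by (intro mult_right_mono) auto
            moreover have "2 * r - 1 + 1 = 2 * r" using r by simp
            ultimately show "real (card (paths_between n E (2 * r - 1) X Y)) \<ge> \<zeta> * real n ^ (2 * r - 1 + 1)"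
              using c by simp
          qed
        qed
      qed
    qed
  qed
qed

end
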